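(* Let $d,\alpha>1$, let $k\le n$ be integers, and fix a constant $\beta\ge1$. There is a random linear map $G:\mathbb{R}^d\to\mathbb{R}^t$ with $t=O(\log k+\tfrac{d}{\alpha^2})$ (hidden constant may depend on $\beta$) such that for every two sets $P\subset\mathbb{R}^d$ of size $n$ and $Q\subset\mathbb{R}^d$ of size $k$, with probability at least $2/3$: (1) $FPQ_k(G(P),G(Q))$ is an $O(\alpha)$-estimation of $FPQ_k(P,Q)$; and (2) every $p\in P$ is an $O(\alpha)$-approximate solution for $FPQ_k(P,Q)$ whenever $Gp$ is a $\beta$-approximate solution for $FPQ_k(G(P),G(Q))$.
   Context: Euclidean norms; $\mathrm{dist}(x,Q)=\min_{q\in Q}\|x-q\|$. For a data set $P$ and query set $Q$ with $|Q|\le k$, $FPQ_k(P,Q)=\max_{p\in P}\mathrm{dist}(p,Q)$ (furthest point query). A point $p\in P$ is a $\gamma$-approximate solution for $FPQ_k(P,Q)$ if $\mathrm{dist}(p,Q)\ge\frac1\gamma FPQ_k(P,Q)$. A number $y$ is a $\gamma$-estimation of $x\ge0$ if $x\le y\le\gamma x$. $G(X)=\{Gx:x\in X\}$. *)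

theory Defs
  imports "HOL-Probability.Probability"
begin

text \<open>Vectors of R^d are represented as functions nat => real vanishing at
  coordinates >= d (the dimension d, and the target dimension t, vary inside
  the statement, so they cannot be type indices).\<close>

definition in_dim :: "nat \<Rightarrow> (nat \<Rightarrow> real) \<Rightarrow> bool" where
  "in_dim d x \<longleftrightarrow> (\<forall>j\<ge>d. x j = 0)"

definition edist :: "nat \<Rightarrow> (nat \<Rightarrow> real) \<Rightarrow> (nat \<Rightarrow> real) \<Rightarrow> real" where
  "edist d x y = sqrt (\<Sum>j<d. (x j - y j)^2)"

definition dist_set :: "nat \<Rightarrow> (nat \<Rightarrow> real) \<Rightarrow> (nat \<Rightarrow> real) set \<Rightarrow> real" where
  "dist_set d x Q = Min (edist d x ` Q)"

definition FPQ :: "nat \<Rightarrow> (nat \<Rightarrow> real) set \<Rightarrow> (nat \<Rightarrow> real) set \<Rightarrow> real" where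
  "FPQ d P Q = Max ((\<lambda>p. dist_set d p Q) ` P)"

definition approx_sol :: "nat \<Rightarrow> real \<Rightarrow> (nat \<Rightarrow> real) set \<Rightarrow> (nat \<Rightarrow> real) set
    \<Rightarrow> (nat \<Rightarrow> real) \<Rightarrow> bool" where
  "approx_sol d \<gamma> P Q p \<longleftrightarrow> p \<in> P \<and> dist_set d p Q \<ge> FPQ d P Q / \<gamma>"

definition estimation :: "real \<Rightarrow> real \<Rightarrow> real \<Rightarrow> bool" where
  "estimation \<gamma> x y \<longleftrightarrow> x \<le> y \<and> y \<le> \<gamma> * x"

definition mat_apply :: "nat \<Rightarrow> nat \<Rightarrow> (nat \<Rightarrow> nat \<Rightarrow> real) \<Rightarrow> (nat \<Rightarrow> real) \<Rightarrow> (nat \<Rightarrow> real)" where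
  "mat_apply t d M x = (\<lambda>i. if i < t then (\<Sum>j<d. M i j * x j) else 0)"

end

theory Submission
  imports Defs
begin

definition rad :: "real pmf" where "rad = pmf_of_set {-1, 1}"

fun rowp :: "nat \<Rightarrow> (nat \<Rightarrow> real) pmf" where
  "rowp 0 = return_pmf (\<lambda>_. 0)"
| "rowp (Suc d) = rowp d \<bind> (\<lambda>f. rad \<bind> (\<lambda>y. return_pmf (f(d := y))))"

fun matp :: "nat \<Rightarrow> nat \<Rightarrow> (nat \<Rightarrow> nat \<Rightarrow> real) pmf" where
  "matp d 0 = return_pmf (\<lambda>_ _. 0)"
| "matp d (Suc t) = matp d t \<bind> (\<lambda>R. rowp d \<bind> (\<lambda>r. return_pmf (R(t := r))))"

lemma set_rad: "set_pmf rad = {-1, 1}"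
  unfolding rad_def by (subst set_pmf_of_set) auto

lemma E_rad: "measure_pmf.expectation rad (h::real\<Rightarrow>real) = (h 1 + h (-1)) / 2"
  unfolding rad_def by (subst integral_pmf_of_set) auto

lemma exp_bind:
  fixes h :: "'b \<Rightarrow> real"
  assumes "finite (set_pmf p)" "\<And>x. x \<in> set_pmf p \<Longrightarrow> finite (set_pmf (f x))"
  shows "measure_pmf.expectation (p \<bind> f) h = measure_pmf.expectation p (\<lambda>x. measure_pmf.expectation (f x) h)"
proof -
  have "measure_pmf.expectation (p \<bind> f) h = (\<Sum>a\<in>set_pmf p. pmf p a *\<^sub>R measure_pmf.expectation (f a) h)"
    by (rule pmf_expectation_bind) (use assms in auto)
  also have "\<dots> = measure_pmf.expectation p (\<lambda>x. measure_pmf.expectation (f x) h)"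
    by (rule integral_measure_pmf[symmetric]) (use assms in auto)
  finally show ?thesis .
qed

lemma fin_rowp: "finite (set_pmf (rowp d))"
  by (induction d) (auto simp: set_rad)

lemma supp_rowp: "f \<in> set_pmf (rowp d) \<Longrightarrow> j \<ge> d \<Longrightarrow> f j = 0"
  by (induction d arbitrary: f) (auto simp: set_rad)

lemma fin_matp: "finite (set_pmf (matp d t))"
  by (induction t) (auto simp: fin_rowp)

lemma E_rowSuc:
  "measure_pmf.expectation (rowp (Suc d)) (h::_\<Rightarrow>real) =
     measure_pmf.expectation (rowp d) (\<lambda>f. (h (f(d:=1)) + h (f(d:=-1))) / 2)"
  by (simp only: rowp.simps, subst exp_bind) (auto simp: fin_rowp set_rad exp_bind E_rad)

lemma E_matSuc:
  "measure_pmf.expectation (matp d (Suc t)) (h::_\<Rightarrow>real) =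
     measure_pmf.expectation (matp d t) (\<lambda>R. measure_pmf.expectation (rowp d) (\<lambda>r. h (R(t:=r))))"
  by (simp only: matp.simps, subst exp_bind) (auto simp: fin_rowp fin_matp exp_bind)

lemma cosh_le: "(exp x + exp (-x)) / 2 \<le> exp ((x::real)^2 / 2)"
proof -
  have key: "(exp x + exp (-x)) / 2 \<le> exp (x^2 / 2)" if x0: "x \<ge> 0" for x :: real
  proof -
    have "-(2*x) * (1/2) + ln (1 + (1/2) * (exp (2*x) - 1)) \<le> (2*x)^2 / 8"
      using Hoeffdings_lemma_aux[of "2*x" "1/2"] x0 by simp
    hence "ln (1 + (1/2) * (exp (2*x) - 1)) \<le> x^2/2 + x"
      by (simp add: power2_eq_square)
    moreover have "1 + (1/2) * (exp (2*x) - 1) > (0::real)" by (simp add: field_simps) (smt (verit) exp_gt_zero)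
    ultimately have "1 + (1/2) * (exp (2*x) - 1) \<le> exp (x^2/2 + x)"
      by (metis exp_le_cancel_iff exp_ln)
    hence "exp (-x) * (1 + (1/2) * (exp (2*x) - 1)) \<le> exp (-x) * exp (x^2/2 + x)"
      by (intro mult_left_mono) auto
    moreover have "exp (-x) * (1 + (1/2) * (exp (2*x) - 1)) = (exp x + exp (-x)) / 2"
      by (simp add: algebra_simps exp_add[symmetric] mult_exp_exp)
    moreover have "exp (-x) * exp (x^2/2 + x) = exp (x^2/2)"
      by (simp add: mult_exp_exp)
    ultimately show ?thesis by simp
  qed
  show ?thesis
  proof (cases "x \<ge> 0")
    case True then show ?thesis by (rule key)
  next
    case False
    then have "(exp (-x) + exp (-(-x))) / 2 \<le> exp ((-x)^2 / 2)" by (intro key) auto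
    then show ?thesis by (simp add: add.commute)
  qed
qed

lemma sum_upd: "(\<Sum>j<Suc d. a j * (f(d:=y)) j) = (\<Sum>j<d. a j * f j) + a d * y"
  by (simp add: sum.lessThan_Suc)

lemma int_rowp: "integrable (measure_pmf (rowp d)) (h :: _ \<Rightarrow> real)"
  by (rule integrable_measure_pmf_finite[OF fin_rowp])

lemma int_matp: "integrable (measure_pmf (matp d t)) (h :: _ \<Rightarrow> real)"
  by (rule integrable_measure_pmf_finite[OF fin_matp])

lemma row_mgf: "measure_pmf.expectation (rowp d) (\<lambda>f. exp (\<Sum>j<d. a j * f j)) \<le> exp ((\<Sum>j<d. (a j)^2) / 2)"
proof (induction d)
  case 0 then show ?case by simp
next
  case (Suc d)
  let ?S = "\<lambda>f. \<Sum>j<d. a j * f j"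
  have "measure_pmf.expectation (rowp (Suc d)) (\<lambda>f. exp (\<Sum>j<Suc d. a j * f j))
      = measure_pmf.expectation (rowp d) (\<lambda>f. exp (?S f) * ((exp (a d) + exp (- a d)) / 2))"
  proof -
    have e: "(exp (u + c * 1) + exp (u + c * -1)) / 2 = exp u * ((exp c + exp (- c)) / 2)" for u c :: real
      by (simp add: distrib_left add_divide_distrib flip: exp_add)
    show ?thesis by (simp only: E_rowSuc sum_upd e)
  qed
  also have "\<dots> \<le> measure_pmf.expectation (rowp d) (\<lambda>f. exp (?S f) * exp ((a d)^2/2))"
    by (intro integral_mono int_rowp mult_left_mono cosh_le) auto
  also have "\<dots> = measure_pmf.expectation (rowp d) (\<lambda>f. exp (?S f)) * exp ((a d)^2/2)"
    by simp
  also have "\<dots> \<le> exp ((\<Sum>j<d. (a j)^2) / 2) * exp ((a d)^2/2)"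
    by (intro mult_right_mono Suc.IH) auto
  also have "\<dots> = exp ((\<Sum>j<Suc d. (a j)^2) / 2)"
    by (simp add: mult_exp_exp add_divide_distrib)
  finally show ?case .
qed

lemma row_m2: "measure_pmf.expectation (rowp d) (\<lambda>f. (\<Sum>j<d. a j * f j)^2) = (\<Sum>j<d. (a j)^2)"
proof (induction d)
  case 0 then show ?case by simp
next
  case (Suc d)
  let ?S = "\<lambda>f. \<Sum>j<d. a j * f j"
  have "measure_pmf.expectation (rowp (Suc d)) (\<lambda>f. (\<Sum>j<Suc d. a j * f j)^2)
      = measure_pmf.expectation (rowp d) (\<lambda>f. (?S f)^2 + (a d)^2)"
  proof -
    have e: "((u + c * 1)^2 + (u + c * -1)^2) / 2 = u^2 + c^2" for u c :: real
      by (simp add: power2_eq_square algebra_simps)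
    show ?thesis by (simp only: E_rowSuc sum_upd e)
  qed
  also have "\<dots> = measure_pmf.expectation (rowp d) (\<lambda>f. (?S f)^2) + (a d)^2"
    by (subst Bochner_Integration.integral_add) (auto intro: int_rowp)
  finally show ?case using Suc.IH by simp
qed

lemma row_m4: "measure_pmf.expectation (rowp d) (\<lambda>f. (\<Sum>j<d. a j * f j)^4) \<le> 3 * (\<Sum>j<d. (a j)^2)^2"
proof (induction d)
  case 0 then show ?case by simp
next
  case (Suc d)
  let ?S = "\<lambda>f. \<Sum>j<d. a j * f j"
  let ?A = "\<Sum>j<d. (a j)^2"
  have "measure_pmf.expectation (rowp (Suc d)) (\<lambda>f. (\<Sum>j<Suc d. a j * f j)^4)
      = measure_pmf.expectation (rowp d) (\<lambda>f. (?S f)^4 + 6 * (a d)^2 * (?S f)^2 + (a d)^4)"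
  proof -
    have e: "((u + c * 1)^4 + (u + c * -1)^4) / 2 = u^4 + 6 * c^2 * u^2 + c^4" for u c :: real
      by (simp add: power2_eq_square power4_eq_xxxx algebra_simps)
    show ?thesis by (simp only: E_rowSuc sum_upd e)
  qed
  also have "\<dots> = measure_pmf.expectation (rowp d) (\<lambda>f. (?S f)^4)
       + 6 * (a d)^2 * measure_pmf.expectation (rowp d) (\<lambda>f. (?S f)^2) + (a d)^4"
    by (simp add: int_rowp)
  also have "\<dots> \<le> 3 * ?A^2 + 6 * (a d)^2 * ?A + (a d)^4"
    using Suc.IH by (simp add: row_m2)
  also have "\<dots> \<le> 3 * (\<Sum>j<Suc d. (a j)^2)^2"
  proof -
    have q: "3*A^2 + 6*c^2*A + c^4 \<le> 3*(A+c^2)^2" for A c :: real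
    proof -
      have "3*(A+c^2)^2 = 3*A^2 + 6*c^2*A + c^4 + 2 * (c^2)^2" by (simp add: power2_eq_square power4_eq_xxxx algebra_simps)
      then show ?thesis by simp
    qed
    show ?thesis using q[of ?A "a d"] by simp
  qed
  finally show ?case .
qed

lemma sum_updR: "(\<Sum>i<Suc t. g i ((R(t:=r)) i)) = (\<Sum>i<t. g i (R i)) + g t r"
  by (simp add: sum.lessThan_Suc)

lemma mat_mgf:
  "measure_pmf.expectation (matp d t) (\<lambda>R. exp (\<Sum>i<t. y i * (\<Sum>j<d. R i j * x j)))
     \<le> exp ((\<Sum>i<t. (y i)^2) * (\<Sum>j<d. (x j)^2) / 2)"
proof (induction t)
  case 0 then show ?case by simp
next
  case (Suc t)
  let ?X = "\<Sum>j<d. (x j)^2"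
  let ?O = "\<lambda>R. \<Sum>i<t. y i * (\<Sum>j<d. R i j * x j)"
  have "measure_pmf.expectation (matp d (Suc t)) (\<lambda>R. exp (\<Sum>i<Suc t. y i * (\<Sum>j<d. R i j * x j)))
    = measure_pmf.expectation (matp d t) (\<lambda>R. exp (?O R) *
        measure_pmf.expectation (rowp d) (\<lambda>r. exp (\<Sum>j<d. (y t * x j) * r j)))"
  proof -
    have e: "exp (u + y t * (\<Sum>j<d. r j * x j)) = exp u * exp (\<Sum>j<d. (y t * x j) * r j)" for u r
      by (simp add: exp_add sum_distrib_left algebra_simps)
    show ?thesis
      by (simp only: E_matSuc sum_updR[where g = "\<lambda>i Ri. y i * (\<Sum>j<d. Ri j * x j)"] e) simp
  qed
  also have "\<dots> \<le> measure_pmf.expectation (matp d t) (\<lambda>R. exp (?O R) * exp ((y t)^2 * ?X / 2))"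
  proof (intro integral_mono int_matp mult_left_mono)
    fix R
    have "measure_pmf.expectation (rowp d) (\<lambda>r. exp (\<Sum>j<d. (y t * x j) * r j)) \<le> exp ((\<Sum>j<d. (y t * x j)^2) / 2)"
      by (rule row_mgf)
    also have "(\<Sum>j<d. (y t * x j)^2) = (y t)^2 * ?X"
      by (simp add: power_mult_distrib sum_distrib_left)
    finally show "measure_pmf.expectation (rowp d) (\<lambda>r. exp (\<Sum>j<d. (y t * x j) * r j)) \<le> exp ((y t)^2 * ?X / 2)" .
  qed auto
  also have "\<dots> = measure_pmf.expectation (matp d t) (\<lambda>R. exp (?O R)) * exp ((y t)^2 * ?X / 2)"
    by simp
  also have "\<dots> \<le> exp ((\<Sum>i<t. (y i)^2) * ?X / 2) * exp ((y t)^2 * ?X / 2)"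
    by (intro mult_right_mono Suc.IH) auto
  also have "\<dots> = exp ((\<Sum>i<Suc t. (y i)^2) * ?X / 2)"
    by (simp add: mult_exp_exp add_divide_distrib distrib_right)
  finally show ?case .
qed

lemma exp_neg_le: "u \<ge> 0 \<Longrightarrow> exp (- u) \<le> 1 - u + u^2" for u :: real
proof -
  assume u: "u \<ge> 0"
  have "1 + u \<le> exp u" by simp
  hence "exp (-u) \<le> 1 / (1 + u)" using u by (simp add: exp_minus field_simps)
  also have "1 / (1 + u) \<le> 1 - u + u^2"
  proof -
    have "1 \<le> (1 + u) * (1 - u + u^2)" using u by (simp add: algebra_simps power2_eq_square power3_eq_cube)
    thus ?thesis using u by (simp add: field_simps)
  qed
  finally show ?thesis .
qed

lemma row_low:
  assumes "l \<ge> 0"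
  shows "measure_pmf.expectation (rowp d) (\<lambda>r. exp (- l * (\<Sum>j<d. r j * v j)^2))
     \<le> 1 - l * (\<Sum>j<d. (v j)^2) + 3 * l^2 * (\<Sum>j<d. (v j)^2)^2"
proof -
  let ?S = "\<lambda>r. (\<Sum>j<d. v j * r j)"
  have eqS: "(\<Sum>j<d. r j * v j) = ?S r" for r by (simp add: mult.commute)
  have "measure_pmf.expectation (rowp d) (\<lambda>r. exp (- l * (?S r)^2))
       \<le> measure_pmf.expectation (rowp d) (\<lambda>r. 1 - l * (?S r)^2 + l^2 * (?S r)^4)"
  proof (intro integral_mono int_rowp)
    fix r
    have "exp (- (l * (?S r)^2)) \<le> 1 - l * (?S r)^2 + (l * (?S r)^2)^2"
      using assms by (intro exp_neg_le) auto
    thus "exp (- l * (?S r)^2) \<le> 1 - l * (?S r)^2 + l^2 * (?S r)^4"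
      by (simp add: power_mult_distrib)
  qed
  also have "\<dots> = 1 - l * measure_pmf.expectation (rowp d) (\<lambda>r. (?S r)^2)
       + l^2 * measure_pmf.expectation (rowp d) (\<lambda>r. (?S r)^4)"
    by (simp add: int_rowp)
  also have "\<dots> \<le> 1 - l * (\<Sum>j<d. (v j)^2) + l^2 * (3 * (\<Sum>j<d. (v j)^2)^2)"
    by (simp only: row_m2) (intro add_left_mono mult_left_mono row_m4, auto)
  finally show ?thesis by (simp add: eqS)
qed

lemma quad_pos: "0 \<le> 1 - l * A + 3 * l^2 * A^2" for l A :: real
proof -
  have "1 - l * A + 3 * l^2 * A^2 = (1 - l*A/2)^2 + (11/4) * (l*A)^2"
    by (simp add: power2_eq_square algebra_simps)
  thus ?thesis by simp
qed

lemma mat_low: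
  assumes "l \<ge> 0"
  shows "measure_pmf.expectation (matp d t) (\<lambda>R. exp (- l * (\<Sum>i<t. (\<Sum>j<d. R i j * v j)^2)))
     \<le> (1 - l * (\<Sum>j<d. (v j)^2) + 3 * l^2 * (\<Sum>j<d. (v j)^2)^2) ^ t"
proof (induction t)
  case 0 then show ?case by simp
next
  case (Suc t)
  let ?q = "1 - l * (\<Sum>j<d. (v j)^2) + 3 * l^2 * (\<Sum>j<d. (v j)^2)^2"
  let ?O = "\<lambda>R. \<Sum>i<t. (\<Sum>j<d. R i j * v j)^2"
  have "measure_pmf.expectation (matp d (Suc t)) (\<lambda>R. exp (- l * (\<Sum>i<Suc t. (\<Sum>j<d. R i j * v j)^2)))
    = measure_pmf.expectation (matp d t) (\<lambda>R. exp (- l * ?O R) *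
        measure_pmf.expectation (rowp d) (\<lambda>r. exp (- l * (\<Sum>j<d. r j * v j)^2)))"
  proof -
    have e: "exp (- l * (u + (\<Sum>j<d. r j * v j)^2)) = exp (- l * u) * exp (- l * (\<Sum>j<d. r j * v j)^2)" for u r
      by (simp add: exp_add[symmetric] algebra_simps)
    show ?thesis
      by (simp only: E_matSuc sum_updR[where g = "\<lambda>i Ri. (\<Sum>j<d. Ri j * v j)^2"] e) simp
  qed
  also have "\<dots> \<le> measure_pmf.expectation (matp d t) (\<lambda>R. exp (- l * ?O R) * ?q)"
    by (intro integral_mono int_matp mult_left_mono row_low assms) auto
  also have "\<dots> = measure_pmf.expectation (matp d t) (\<lambda>R. exp (- l * ?O R)) * ?q"
    by simp
  also have "\<dots> \<le> ?q ^ t * ?q"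
    by (intro mult_right_mono Suc.IH quad_pos)
  finally show ?case by (simp add: mult.commute)
qed

lemma markov_pmf:
  fixes u :: "'a \<Rightarrow> real"
  assumes "finite (set_pmf p)" "\<And>x. u x \<ge> 0" "c > 0"
  shows "measure_pmf.prob p {x. u x \<ge> c} \<le> measure_pmf.expectation p u / c"
  using integral_Markov_inequality_measure[of "measure_pmf p" u UNIV c] assms
  by (auto intro: integrable_measure_pmf_finite)

lemma upper_tail:
  assumes "l > 0"
  shows "measure_pmf.prob (matp d t) {R. s \<le> (\<Sum>i<t. y i * (\<Sum>j<d. R i j * x j))}
     \<le> exp (l^2 * (\<Sum>i<t. (y i)^2) * (\<Sum>j<d. (x j)^2) / 2 - l * s)"
proof -
  let ?B = "\<lambda>R. (\<Sum>i<t. y i * (\<Sum>j<d. R i j * x j))"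
  have "{R. s \<le> ?B R} = {R. exp (l * s) \<le> exp (\<Sum>i<t. (l * y i) * (\<Sum>j<d. R i j * x j))}"
  proof -
    have "(\<Sum>i<t. (l * y i) * (\<Sum>j<d. R i j * x j)) = l * ?B R" for R
      by (simp add: sum_distrib_left mult.assoc)
    thus ?thesis using assms by (simp del: exp_le_cancel_iff add: exp_le_cancel_iff mult_le_cancel_left_pos)
  qed
  also have "measure_pmf.prob (matp d t) \<dots>
      \<le> measure_pmf.expectation (matp d t) (\<lambda>R. exp (\<Sum>i<t. (l * y i) * (\<Sum>j<d. R i j * x j))) / exp (l * s)"
    by (intro markov_pmf fin_matp) auto
  also have "\<dots> \<le> exp ((\<Sum>i<t. (l * y i)^2) * (\<Sum>j<d. (x j)^2) / 2) / exp (l * s)"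
    by (intro divide_right_mono mat_mgf) auto
  also have "\<dots> = exp (l^2 * (\<Sum>i<t. (y i)^2) * (\<Sum>j<d. (x j)^2) / 2 - l * s)"
    by (simp add: exp_diff power_mult_distrib sum_distrib_left)
  finally show ?thesis .
qed

lemma lower_tail:
  assumes A: "(\<Sum>j<d. (v j)^2) > 0"
  shows "measure_pmf.prob (matp d t) {R. (\<Sum>i<t. (\<Sum>j<d. R i j * v j)^2) \<le> real t * (\<Sum>j<d. (v j)^2) / 2}
     \<le> exp (- real t / 48)"
proof -
  define a where "a = (\<Sum>j<d. (v j)^2)"
  have a: "a > 0" using A by (simp add: a_def)
  define l where "l = 1 / (12 * a)"
  have l: "l > 0" using a by (simp add: l_def)
  let ?X = "\<lambda>R. (\<Sum>i<t. (\<Sum>j<d. R i j * v j)^2)"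
  have "{R. ?X R \<le> real t * a / 2} \<subseteq> {R. exp (- l * (real t * a / 2)) \<le> exp (- l * ?X R)}"
    using l by auto
  hence "measure_pmf.prob (matp d t) {R. ?X R \<le> real t * a / 2}
      \<le> measure_pmf.prob (matp d t) {R. exp (- l * (real t * a / 2)) \<le> exp (- l * ?X R)}"
    by (intro measure_pmf.finite_measure_mono) auto
  also have "\<dots> \<le> measure_pmf.expectation (matp d t) (\<lambda>R. exp (- l * ?X R)) / exp (- l * (real t * a / 2))"
    by (intro markov_pmf fin_matp) auto
  also have "\<dots> \<le> (1 - l * a + 3 * l^2 * a^2) ^ t / exp (- l * (real t * a / 2))"
    by (intro divide_right_mono) (use mat_low[OF less_imp_le[OF l], of d t v] in \<open>auto simp: a_def\<close>)
  also have "1 - l * a + 3 * l^2 * a^2 = 15/16"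
    using a by (simp add: l_def power2_eq_square field_simps)
  also have "- l * (real t * a / 2) = - real t / 24"
    using a by (simp add: l_def field_simps)
  also have "(15/16::real) ^ t \<le> exp (- 1/16) ^ t"
  proof (intro power_mono)
    show "(15/16::real) \<le> exp (- 1/16)" using exp_ge_add_one_self[of "- 1/16 :: real"] by simp
  qed auto
  hence "(15/16::real) ^ t / exp (- real t / 24) \<le> exp (- 1/16) ^ t / exp (- real t / 24)"
    by (intro divide_right_mono) auto
  also have "exp (- 1/16) ^ t / exp (- real t / 24) = exp (- real t / 48)"
    by (simp add: exp_of_nat_mult[symmetric] exp_diff[symmetric])
  finally show ?thesis by (simp add: a_def)
qed

definition W :: "nat \<Rightarrow> real \<Rightarrow> (nat \<Rightarrow> int) set" where
  "W n B = {w. (\<forall>j\<ge>n. w j = 0) \<and> (\<Sum>j<n. (real_of_int (w j))^2) \<le> B}"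

lemma gsum_aux: "(\<Sum>m\<in>{-int K..int K}. exp (- ((real_of_int m)^2))) \<le> 3 - 2 * (1/2)^K"
proof (induction K)
  case 0 then show ?case by simp
next
  case (Suc K)
  have set: "{-int (Suc K)..int (Suc K)} = insert (int K + 1) (insert (-(int K + 1)) {-int K..int K})"
    by auto
  have e: "exp (- ((real_of_int (int K + 1))^2)) \<le> (1/2)^(Suc K)"
  proof -
    have h: "(real K + 1) * 1 \<le> (real K + 1) * (real K + 1)" by (intro mult_left_mono) auto
    have h2: "real K + 1 \<le> (real K + 1)^2" using h by (simp add: power2_eq_square)
    have "exp (- ((real K + 1)^2)) \<le> exp (- (real K + 1))"
      using h2 by simp
    also have "exp (- (real K + 1)) = exp (-1) ^ Suc K"
    proof -
      have "exp (-1) ^ Suc K = exp (real (Suc K) * (-1))" by (rule exp_of_nat_mult[symmetric])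
      thus ?thesis by simp
    qed
    also have "\<dots> \<le> (1/2) ^ Suc K"
    proof (intro power_mono)
      have "exp 1 \<ge> (2::real)" using exp_ge_add_one_self[of 1] by simp
      thus "exp (-1) \<le> (1/2::real)" by (simp add: exp_minus field_simps)
    qed auto
    finally show ?thesis by simp
  qed
  have e2: "exp (- ((real_of_int (-(int K + 1)))^2)) = exp (- ((real_of_int (int K + 1))^2))"
    by (simp add: power2_eq_square algebra_simps)
  have "(\<Sum>m\<in>{-int (Suc K)..int (Suc K)}. exp (- ((real_of_int m)^2)))
     = exp (- ((real_of_int (int K + 1))^2)) + exp (- ((real_of_int (-(int K + 1)))^2))
       + (\<Sum>m\<in>{-int K..int K}. exp (- ((real_of_int m)^2)))"
    unfolding set by simp
  also have "\<dots> \<le> (1/2)^(Suc K) + (1/2)^(Suc K) + (3 - 2 * (1/2)^K)"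
    using e Suc.IH e2 by linarith
  also have "\<dots> = 3 - 2 * (1/2)^(Suc K)" by simp
  finally show ?case .
qed

lemma gsum: "(\<Sum>m\<in>{-int K..int K}. exp (- ((real_of_int m)^2))) \<le> 3"
proof -
  have "0 \<le> (1/2::real)^K" by simp
  thus ?thesis using gsum_aux[of K] by linarith
qed

lemma W_card: "finite (W n B) \<and> real (card (W n B)) \<le> exp B * 3^n"
proof (induction n arbitrary: B)
  case 0
  show ?case
  proof (cases "B \<ge> 0")
    case True
    hence "W 0 B = {\<lambda>_. 0}" by (auto simp: W_def)
    moreover have "1 \<le> exp B" using True exp_ge_add_one_self[of B] by linarith
    ultimately show ?thesis by simp
  next
    case False
    hence "W 0 B = {}" by (auto simp: W_def)
    thus ?thesis by simp
  qed
next
  case (Suc n)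
  define K where "K = nat \<lceil>B\<rceil>"
  let ?F = "\<lambda>m. (\<lambda>w. w(n:=m)) ` W n (B - ((real_of_int m)^2))"
  have sub: "W (Suc n) B \<subseteq> (\<Union>m\<in>{-int K..int K}. ?F m)"
  proof
    fix w assume w: "w \<in> W (Suc n) B"
    let ?m = "w n"
    have sumS: "(\<Sum>j<Suc n. (real_of_int (w j))^2) = (\<Sum>j<n. (real_of_int (w j))^2) + (real_of_int ?m)^2"
      by simp
    have nn: "(\<Sum>j<n. (real_of_int (w j))^2) \<ge> 0" by (intro sum_nonneg) auto
    have w1: "(\<Sum>j<Suc n. (real_of_int (w j))^2) \<le> B" and w2: "\<forall>j\<ge>Suc n. w j = 0"
      using w by (auto simp: W_def)
    have "w(n:=0) \<in> W n (B - (real_of_int ?m)^2)"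
    proof -
      have "(\<Sum>j<n. (real_of_int ((w(n:=0)) j))^2) = (\<Sum>j<n. (real_of_int (w j))^2)"
        by (intro sum.cong) auto
      thus ?thesis using w1 w2 sumS by (auto simp: W_def)
    qed
    moreover have "w = (w(n:=0))(n := ?m)" by simp
    moreover have "?m \<in> {-int K..int K}"
    proof -
      have "(real_of_int ?m)^2 \<le> B" using w1 sumS nn by linarith
      moreover have "\<bar>?m\<bar> \<le> ?m^2"
      proof (cases "?m = 0")
        case False
        hence "\<bar>?m\<bar> * 1 \<le> \<bar>?m\<bar> * \<bar>?m\<bar>" by (intro mult_left_mono) auto
        thus ?thesis by (simp add: power2_eq_square abs_mult[symmetric])
      qed simp
      moreover have "real_of_int \<bar>?m\<bar> \<le> real_of_int (?m^2)"
        using \<open>\<bar>?m\<bar> \<le> ?m^2\<close> by (simp only: of_int_le_iff)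
      ultimately have "real_of_int \<bar>?m\<bar> \<le> B" by simp
      hence "\<bar>?m\<bar> \<le> \<lceil>B\<rceil>" by linarith
      moreover have "B \<ge> 0" using \<open>real_of_int \<bar>?m\<bar> \<le> B\<close> by (smt (verit) of_int_nonneg abs_ge_zero)
      ultimately show ?thesis unfolding K_def by auto
    qed
    ultimately show "w \<in> (\<Union>m\<in>{-int K..int K}. ?F m)" by blast
  qed
  have finF: "finite (?F m)" for m using Suc.IH by blast
  have fin: "finite (W (Suc n) B)"
    by (rule finite_subset[OF sub]) (auto intro: finF)
  have "real (card (W (Suc n) B)) \<le> real (card (\<Union>m\<in>{-int K..int K}. ?F m))"
    by (intro of_nat_mono card_mono sub) (auto intro: finF)
  also have "\<dots> \<le> (\<Sum>m\<in>{-int K..int K}. real (card (?F m)))"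
    using card_UN_le[of "{-int K..int K}" ?F] by (simp flip: of_nat_sum)
  also have "\<dots> \<le> (\<Sum>m\<in>{-int K..int K}. exp (B - ((real_of_int m)^2)) * 3^n)"
  proof (intro sum_mono)
    fix m
    have "real (card (?F m)) \<le> real (card (W n (B - ((real_of_int m)^2))))"
      by (intro of_nat_mono card_image_le) (use Suc.IH in blast)
    also have "\<dots> \<le> exp (B - ((real_of_int m)^2)) * 3^n" using Suc.IH by blast
    finally show "real (card (?F m)) \<le> exp (B - ((real_of_int m)^2)) * 3^n" .
  qed
  also have "\<dots> = exp B * 3^n * (\<Sum>m\<in>{-int K..int K}. exp (- ((real_of_int m)^2)))"
    by (simp add: sum_distrib_left exp_diff exp_minus field_simps)
  also have "\<dots> \<le> exp B * 3^n * 3"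
    by (intro mult_left_mono gsum) auto
  finally show ?case using fin by simp
qed

definition dl :: "nat \<Rightarrow> real" where "dl n = 1 / (2 * sqrt (real n))"

definition net :: "nat \<Rightarrow> (nat \<Rightarrow> real) set" where
  "net n = {z. (\<forall>j\<ge>n. z j = 0) \<and> (\<forall>j<n. \<exists>m::int. z j = dl n * m) \<and> (\<Sum>j<n. (z j)^2) \<le> 4}"

lemma net_card:
  assumes "n \<ge> 1"
  shows "finite (net n) \<and> real (card (net n)) \<le> (3 * exp 16) ^ n"
proof -
  have dlp: "dl n > 0" using assms by (simp add: dl_def)
  have dl2: "1 / (dl n)^2 = 4 * real n" using assms by (simp add: dl_def power2_eq_square field_simps)
  define \<phi> where "\<phi> z = (\<lambda>j. \<lfloor>z j / dl n\<rfloor>)" for z :: "nat \<Rightarrow> real"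
  have rep: "z j = dl n * \<phi> z j" if "z \<in> net n" for z j
  proof (cases "j < n")
    case True
    from that True have "\<exists>m::int. z j = dl n * m" by (auto simp: net_def)
    then obtain m :: int where "z j = dl n * m" by blast
    thus ?thesis using dlp by (simp add: \<phi>_def)
  next
    case False thus ?thesis using that by (auto simp: net_def \<phi>_def)
  qed
  have inj: "inj_on \<phi> (net n)"
  proof (rule inj_onI)
    fix z z' assume a: "z \<in> net n" "z' \<in> net n" "\<phi> z = \<phi> z'"
    show "z = z'"
    proof (rule ext)
      fix j
      have "z j = dl n * \<phi> z j" "z' j = dl n * \<phi> z' j" using rep a by blast+
      thus "z j = z' j" using a(3) by simp
    qed
  qed
  have img: "\<phi> ` net n \<subseteq> W n (16 * real n)"
  proof
    fix w assume "w \<in> \<phi> ` net n"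
    then obtain z where z: "z \<in> net n" "w = \<phi> z" by blast
    have wj: "(real_of_int (w j))^2 = (z j)^2 / (dl n)^2" for j
    proof -
      have "z j = dl n * \<phi> z j" using rep z(1) by blast
      hence "(z j)^2 / (dl n)^2 = (real_of_int (\<phi> z j))^2" using dlp by (simp add: power_mult_distrib)
      thus ?thesis using z(2) by simp
    qed
    have "(\<Sum>j<n. (real_of_int (w j))^2) = (\<Sum>j<n. (z j)^2) / (dl n)^2"
      by (simp only: wj sum_divide_distrib)
    also have "\<dots> = (\<Sum>j<n. (z j)^2) * (1 / (dl n)^2)" by simp
    also have "\<dots> = (\<Sum>j<n. (z j)^2) * (4 * real n)" by (simp only: dl2)
    also have "\<dots> \<le> 4 * (4 * real n)" using z(1) by (intro mult_right_mono) (auto simp: net_def)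
    finally have "(\<Sum>j<n. (real_of_int (w j))^2) \<le> 16 * real n" by simp
    moreover have "\<forall>j\<ge>n. w j = 0" using z by (auto simp: net_def \<phi>_def)
    ultimately show "w \<in> W n (16 * real n)" by (simp add: W_def)
  qed
  have finW: "finite (W n (16 * real n))" and cW: "real (card (W n (16 * real n))) \<le> exp (16 * real n) * 3^n"
    using W_card by blast+
  have fin: "finite (net n)"
    using finite_imageD[OF finite_subset[OF img finW] inj] .
  have "card (net n) = card (\<phi> ` net n)" using card_image[OF inj] by simp
  also have "\<dots> \<le> card (W n (16 * real n))" by (intro card_mono finW img)
  finally have "real (card (net n)) \<le> exp (16 * real n) * 3^n" using cW by linarith
  also have "exp (16 * real n) * 3^n = (3 * exp 16) ^ n"
  proof -
    have "exp 16 ^ n = exp (real n * 16)" by (rule exp_of_nat_mult[symmetric])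
    thus ?thesis by (simp only: power_mult_distrib mult.commute)
  qed
  finally show ?thesis using fin by simp
qed

lemma net_round:
  assumes "n \<ge> 1" "\<forall>j\<ge>n. x j = 0" "(\<Sum>j<n. (x j)^2) \<le> 1"
  shows "\<exists>z\<in>net n. (\<Sum>j<n. (x j - z j)^2) \<le> 1/16"
proof -
  have dlp: "dl n > 0" using assms by (simp add: dl_def)
  have dl2: "(dl n)^2 = 1 / (4 * real n)" using assms by (simp add: dl_def power2_eq_square field_simps)
  define z where "z j = (if j < n then dl n * round (x j / dl n) else 0)" for j
  have err: "(x j - z j)^2 \<le> 1 / (16 * real n)" if "j < n" for j
  proof -
    have "\<bar>of_int (round (x j / dl n)) - x j / dl n\<bar> \<le> 1/2" by (rule of_int_round_abs_le)
    moreover have "z j - x j = dl n * (of_int (round (x j / dl n)) - x j / dl n)"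
      using that dlp by (simp add: z_def right_diff_distrib)
    ultimately have "\<bar>z j - x j\<bar> \<le> dl n * (1/2)"
      using dlp by (simp add: abs_mult)
    hence "\<bar>z j - x j\<bar> \<le> dl n / 2" by simp
    hence "(x j - z j)^2 \<le> (dl n / 2)^2"
      by (metis abs_minus_commute abs_ge_zero power_mono power2_abs)
    also have "\<dots> = 1 / (16 * real n)" using dl2 by (simp add: power_divide)
    finally show ?thesis .
  qed
  have E: "(\<Sum>j<n. (x j - z j)^2) \<le> 1/16"
  proof -
    have "(\<Sum>j<n. (x j - z j)^2) \<le> (\<Sum>j<n. 1 / (16 * real n))" by (intro sum_mono err) auto
    also have "\<dots> = 1/16" using assms by simp
    finally show ?thesis .
  qed
  have "(\<Sum>j<n. (z j)^2) \<le> (\<Sum>j<n. 2 * (x j)^2 + 2 * (x j - z j)^2)"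
  proof (intro sum_mono)
    fix j
    have "0 \<le> (x j + (x j - z j))^2" by simp
    thus "(z j)^2 \<le> 2 * (x j)^2 + 2 * (x j - z j)^2" by (simp add: power2_eq_square algebra_simps)
  qed
  also have "\<dots> = 2 * (\<Sum>j<n. (x j)^2) + 2 * (\<Sum>j<n. (x j - z j)^2)"
    by (simp add: sum.distrib sum_distrib_left)
  also have "\<dots> \<le> 4" using E assms(3) by simp
  finally have "(\<Sum>j<n. (z j)^2) \<le> 4" .
  hence "z \<in> net n" by (auto simp: net_def z_def)
  thus ?thesis using E by blast
qed

lemma net_neg: assumes "z \<in> net n" shows "(\<lambda>j. - z j) \<in> net n"
proof -
  have "\<exists>m::int. - z j = dl n * m" if "j < n" for j
  proof -
    from assms that obtain m :: int where "z j = dl n * m" by (auto simp: net_def)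
    hence "- z j = dl n * of_int (- m)" by simp
    thus ?thesis by blast
  qed
  thus ?thesis using assms by (auto simp: net_def)
qed

definition n2 :: "nat \<Rightarrow> (nat \<Rightarrow> real) \<Rightarrow> real" where "n2 n x = (\<Sum>j<n. (x j)^2)"

definition bil :: "nat \<Rightarrow> nat \<Rightarrow> (nat \<Rightarrow> nat \<Rightarrow> real) \<Rightarrow> (nat \<Rightarrow> real) \<Rightarrow> (nat \<Rightarrow> real) \<Rightarrow> real" where
  "bil t d R y x = (\<Sum>i<t. y i * (\<Sum>j<d. R i j * x j))"

lemma n2_nonneg: "n2 n x \<ge> 0" unfolding n2_def by (intro sum_nonneg) auto

lemma n2_scale: "n2 n (\<lambda>j. c * x j) = c^2 * n2 n x"
  unfolding n2_def by (simp add: power_mult_distrib sum_distrib_left)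

lemma n2_zero: "n2 n x = 0 \<Longrightarrow> j < n \<Longrightarrow> x j = 0"
  unfolding n2_def by (subst (asm) sum_nonneg_eq_0_iff) auto

lemma comp_le: "j < n \<Longrightarrow> n2 n x \<le> 1 \<Longrightarrow> \<bar>x j\<bar> \<le> 1"
proof -
  assume j: "j < n" and x: "n2 n x \<le> 1"
  have "(x j)^2 \<le> n2 n x" unfolding n2_def using j by (intro member_le_sum) auto
  hence "(x j)^2 \<le> 1" using x by simp
  thus "\<bar>x j\<bar> \<le> 1" by (simp add: abs_square_le_1)
qed

lemma bil_scale_l: "bil t d R (\<lambda>i. c * y i) x = c * bil t d R y x"
  unfolding bil_def by (simp add: sum_distrib_left mult.assoc)

lemma bil_scale_r: "bil t d R y (\<lambda>j. c * x j) = c * bil t d R y x"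
  unfolding bil_def by (simp add: sum_distrib_left algebra_simps)

lemma bil_split: "bil t d R y x = bil t d R y' x' + bil t d R (\<lambda>i. y i - y' i) x + bil t d R y' (\<lambda>j. x j - x' j)"
  unfolding bil_def by (simp add: algebra_simps sum.distrib sum_subtractf sum_distrib_left)

lemma bil_zero_l: "n2 t y = 0 \<Longrightarrow> bil t d R y x = 0"
  unfolding bil_def by (intro sum.neutral) (auto dest: n2_zero)

lemma bil_zero_r: assumes "n2 d x = 0" shows "bil t d R y x = 0"
proof -
  have "(\<Sum>j<d. R i j * x j) = 0" for i using n2_zero[OF assms] by (intro sum.neutral) auto
  thus ?thesis unfolding bil_def by simp
qed

lemma bil_bound:
  assumes "n2 t y \<le> 1" "n2 d x \<le> 1"
  shows "bil t d R y x \<le> (\<Sum>i<t. \<Sum>j<d. \<bar>R i j\<bar>)"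
proof -
  have "bil t d R y x \<le> \<bar>bil t d R y x\<bar>" by simp
  also have "\<dots> \<le> (\<Sum>i<t. \<bar>y i * (\<Sum>j<d. R i j * x j)\<bar>)" unfolding bil_def by (rule sum_abs)
  also have "\<dots> \<le> (\<Sum>i<t. \<Sum>j<d. \<bar>R i j\<bar>)"
  proof (intro sum_mono)
    fix i assume i: "i \<in> {..<t}"
    have "\<bar>y i * (\<Sum>j<d. R i j * x j)\<bar> = \<bar>y i\<bar> * \<bar>\<Sum>j<d. R i j * x j\<bar>" by (simp add: abs_mult)
    also have "\<dots> \<le> 1 * \<bar>\<Sum>j<d. R i j * x j\<bar>"
      using comp_le[of i t y] i assms by (intro mult_right_mono) auto
    also have "\<dots> \<le> (\<Sum>j<d. \<bar>R i j * x j\<bar>)" by (simp add: sum_abs)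
    also have "\<dots> \<le> (\<Sum>j<d. \<bar>R i j\<bar>)"
    proof (intro sum_mono)
      fix j assume "j \<in> {..<d}"
      hence "\<bar>x j\<bar> \<le> 1" using comp_le assms by auto
      thus "\<bar>R i j * x j\<bar> \<le> \<bar>R i j\<bar>" by (simp add: abs_mult mult_left_le)
    qed
    finally show "\<bar>y i * (\<Sum>j<d. R i j * x j)\<bar> \<le> (\<Sum>j<d. \<bar>R i j\<bar>)" .
  qed
  finally show ?thesis .
qed

lemma net_in_dim: "z \<in> net n \<Longrightarrow> in_dim n z"
  by (auto simp: net_def in_dim_def)

lemma opbound:
  assumes t: "t \<ge> 1" and d: "d \<ge> 1"
    and H: "\<forall>y'\<in>net t. \<forall>x'\<in>net d. bil t d R y' x' < s"
    and x: "in_dim d x" and y: "in_dim t y"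
  shows "bil t d R y x \<le> 4 * s * sqrt (n2 d x) * sqrt (n2 t y)"
proof -
  define U where "U = {bil t d R y x | y x. in_dim t y \<and> in_dim d x \<and> n2 t y \<le> 1 \<and> n2 d x \<le> 1}"
  have zU: "0 \<in> U"
  proof -
    have "bil t d R (\<lambda>_. 0) (\<lambda>_. 0) = 0" by (simp add: bil_def)
    moreover have "n2 t (\<lambda>_. 0) = 0" "n2 d (\<lambda>_. 0) = 0" by (simp_all add: n2_def)
    ultimately show ?thesis unfolding U_def in_dim_def by force
  qed
  have bdd: "bdd_above U"
    by (rule bdd_aboveI[of _ "\<Sum>i<t. \<Sum>j<d. \<bar>R i j\<bar>"]) (auto simp: U_def intro: bil_bound)
  define B0 where "B0 = Sup U"
  have upper: "u \<le> B0" if "u \<in> U" for u unfolding B0_def by (rule cSup_upper[OF that bdd])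
  have B0nn: "B0 \<ge> 0" using upper[OF zU] .
  have key: "u \<le> s + 3/4 * B0" if "u \<in> U" for u
  proof -
    from that obtain y x where yx: "u = bil t d R y x" "in_dim t y" "in_dim d x" "n2 t y \<le> 1" "n2 d x \<le> 1"
      unfolding U_def by blast
    obtain y' where y': "y' \<in> net t" "(\<Sum>j<t. (y j - y' j)^2) \<le> 1/16"
      using net_round[of t y] t yx by (auto simp: in_dim_def n2_def)
    obtain x' where x': "x' \<in> net d" "(\<Sum>j<d. (x j - x' j)^2) \<le> 1/16"
      using net_round[of d x] d yx by (auto simp: in_dim_def n2_def)
    have e0: "bil t d R y' x' < s" using H y' x' by blast
    have e1: "bil t d R (\<lambda>i. y i - y' i) x \<le> B0 / 4"
    proof -
      let ?y2 = "\<lambda>i. 4 * (y i - y' i)"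
      have "n2 t ?y2 = 4^2 * n2 t (\<lambda>i. y i - y' i)" by (rule n2_scale)
      also have "\<dots> \<le> 1" using y'(2) by (simp add: n2_def)
      finally have n: "n2 t ?y2 \<le> 1" .
      have "in_dim t ?y2" using yx(2) net_in_dim[OF y'(1)] by (auto simp: in_dim_def)
      hence "bil t d R ?y2 x \<in> U" unfolding U_def using yx(3) yx(5) n by blast
      hence "bil t d R ?y2 x \<le> B0" by (rule upper)
      moreover have "bil t d R ?y2 x = 4 * bil t d R (\<lambda>i. y i - y' i) x" by (rule bil_scale_l)
      ultimately show ?thesis by simp
    qed
    have e2: "bil t d R y' (\<lambda>j. x j - x' j) \<le> B0 / 2"
    proof -
      let ?y3 = "\<lambda>i. (1/2) * y' i"
      let ?x3 = "\<lambda>j. 4 * (x j - x' j)"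
      have "n2 t ?y3 = (1/2)^2 * n2 t y'" by (rule n2_scale)
      also have "\<dots> \<le> 1" using y'(1) by (simp add: n2_def net_def power2_eq_square)
      finally have a: "n2 t ?y3 \<le> 1" .
      have "n2 d ?x3 = 4^2 * n2 d (\<lambda>j. x j - x' j)" by (rule n2_scale)
      also have "\<dots> \<le> 1" using x'(2) by (simp add: n2_def)
      finally have b: "n2 d ?x3 \<le> 1" .
      have "in_dim t ?y3" using net_in_dim[OF y'(1)] by (auto simp: in_dim_def)
      moreover have "in_dim d ?x3" using yx(3) net_in_dim[OF x'(1)] by (auto simp: in_dim_def)
      ultimately have "bil t d R ?y3 ?x3 \<in> U" unfolding U_def using a b by blast
      hence "bil t d R ?y3 ?x3 \<le> B0" by (rule upper)
      moreover have "bil t d R ?y3 ?x3 = (1/2) * (4 * bil t d R y' (\<lambda>j. x j - x' j))"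
        by (simp only: bil_scale_l bil_scale_r)
      ultimately show ?thesis by simp
    qed
    have "u = bil t d R y' x' + bil t d R (\<lambda>i. y i - y' i) x + bil t d R y' (\<lambda>j. x j - x' j)"
      using yx(1) bil_split by simp
    thus ?thesis using e0 e1 e2 by linarith
  qed
  have "B0 \<le> s + 3/4 * B0" unfolding B0_def
    using zU key by (intro cSup_least) (auto simp: B0_def)
  hence B0s: "B0 \<le> 4 * s" by simp
  show ?thesis
  proof (cases "n2 d x = 0 \<or> n2 t y = 0")
    case True
    hence "bil t d R y x = 0" using bil_zero_l bil_zero_r by blast
    moreover have "s \<ge> 0" using B0s B0nn by simp
    ultimately show ?thesis using n2_nonneg[of d x] n2_nonneg[of t y] by simp
  next
    case False
    define a where "a = sqrt (n2 d x)"
    define b where "b = sqrt (n2 t y)"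
    have a: "a > 0" and b: "b > 0" using False n2_nonneg unfolding a_def b_def
      by (metis le_less real_sqrt_gt_0_iff)+
    have a2: "a^2 = n2 d x" and b2: "b^2 = n2 t y" unfolding a_def b_def using n2_nonneg by simp_all
    let ?x1 = "\<lambda>j. (1/a) * x j"
    let ?y1 = "\<lambda>i. (1/b) * y i"
    have "n2 d ?x1 = (1/a)^2 * n2 d x" by (rule n2_scale)
    hence nx: "n2 d ?x1 \<le> 1" using a a2 False by (simp add: power_divide)
    have "n2 t ?y1 = (1/b)^2 * n2 t y" by (rule n2_scale)
    hence ny: "n2 t ?y1 \<le> 1" using b b2 False by (simp add: power_divide)
    have ix: "in_dim d ?x1" and iy: "in_dim t ?y1" using x y by (auto simp: in_dim_def)
    have "bil t d R ?y1 ?x1 \<in> U" unfolding U_def using nx ny ix iy by blast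
    hence "bil t d R ?y1 ?x1 \<le> 4 * s" using upper B0s by fastforce
    moreover have "bil t d R ?y1 ?x1 = (1/b) * ((1/a) * bil t d R y x)"
      by (simp only: bil_scale_l bil_scale_r)
    ultimately have "bil t d R y x / (a * b) \<le> 4 * s" by (simp add: mult.commute)
    hence "bil t d R y x \<le> 4 * s * (a * b)" using a b by (simp add: divide_le_eq)
    thus ?thesis by (simp add: a_def b_def mult.assoc)
  qed
qed

lemma opbound2:
  assumes t: "t \<ge> 1" and d: "d \<ge> 1"
    and H: "\<forall>y'\<in>net t. \<forall>x'\<in>net d. bil t d R y' x' < s"
    and x: "in_dim d x"
  shows "n2 t (mat_apply t d R x) \<le> (4 * s)^2 * n2 d x"
proof -
  let ?y = "mat_apply t d R x"
  have y: "in_dim t ?y" by (simp add: in_dim_def mat_apply_def)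
  have "bil t d R ?y x = n2 t ?y"
    unfolding bil_def n2_def mat_apply_def by (intro sum.cong) (auto simp: power2_eq_square)
  hence le: "n2 t ?y \<le> 4 * s * sqrt (n2 d x) * sqrt (n2 t ?y)"
    using opbound[OF t d H x y] by simp
  show ?thesis
  proof (cases "n2 t ?y = 0")
    case True thus ?thesis using n2_nonneg by simp
  next
    case False
    hence "n2 t ?y > 0" using n2_nonneg[of t ?y] by linarith
    hence p: "sqrt (n2 t ?y) > 0" by simp
    have "sqrt (n2 t ?y) * sqrt (n2 t ?y) \<le> (4 * s * sqrt (n2 d x)) * sqrt (n2 t ?y)"
      using le n2_nonneg by (simp add: mult.assoc)
    hence "sqrt (n2 t ?y) \<le> 4 * s * sqrt (n2 d x)" by (rule mult_right_le_imp_le[OF _ p])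
    moreover have "0 \<le> sqrt (n2 t ?y)" using n2_nonneg[of t ?y] by simp
    ultimately have "(sqrt (n2 t ?y))^2 \<le> (4 * s * sqrt (n2 d x))^2" by (rule power_mono)
    thus ?thesis using n2_nonneg by (simp add: power_mult_distrib)
  qed
qed

lemma edist_nonneg: "edist n x y \<ge> 0" unfolding edist_def by (intro real_sqrt_ge_zero sum_nonneg) auto

lemma ds_le: "finite Q \<Longrightarrow> q \<in> Q \<Longrightarrow> dist_set n x Q \<le> edist n x q"
  unfolding dist_set_def by (intro Min_le) auto

lemma ds_in: "finite Q \<Longrightarrow> Q \<noteq> {} \<Longrightarrow> \<exists>q\<in>Q. dist_set n x Q = edist n x q"
proof -
  assume "finite Q" "Q \<noteq> {}"
  hence "Min (edist n x ` Q) \<in> edist n x ` Q" by (intro Min_in) auto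
  thus ?thesis unfolding dist_set_def by blast
qed

lemma ds_nonneg: "finite Q \<Longrightarrow> Q \<noteq> {} \<Longrightarrow> dist_set n x Q \<ge> 0"
  using ds_in[of Q n x] edist_nonneg by metis

lemma fpq_ge: "finite P \<Longrightarrow> p \<in> P \<Longrightarrow> dist_set n p Q \<le> FPQ n P Q"
  unfolding FPQ_def by (intro Max_ge) auto

lemma fpq_in: "finite P \<Longrightarrow> P \<noteq> {} \<Longrightarrow> \<exists>p\<in>P. FPQ n P Q = dist_set n p Q"
proof -
  assume "finite P" "P \<noteq> {}"
  hence "Max ((\<lambda>p. dist_set n p Q) ` P) \<in> (\<lambda>p. dist_set n p Q) ` P" by (intro Max_in) auto
  thus ?thesis unfolding FPQ_def by blast
qed

lemma ds_img: "dist_set t (g p) (g ` Q) = Min ((\<lambda>q. edist t (g p) (g q)) ` Q)"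
  unfolding dist_set_def by (simp add: image_image)

lemma det:
  fixes g :: "(nat \<Rightarrow> real) \<Rightarrow> (nat \<Rightarrow> real)"
  assumes P: "finite P" "P \<noteq> {}" and Q: "finite Q" "Q \<noteq> {}"
    and Hup: "\<forall>p\<in>P. \<forall>q\<in>Q. edist t (g p) (g q) \<le> B * edist d p q"
    and p0: "p0 \<in> P" "dist_set d p0 Q = FPQ d P Q"
    and Hlow: "\<forall>q\<in>Q. edist t (g p0) (g q) \<ge> edist d p0 q"
    and B: "B \<ge> 0" and bet: "\<beta> \<ge> 1" and C1: "C' \<ge> B" and C2: "C' \<ge> \<beta> * B" and C0: "C' > 0"
  shows "estimation C' (FPQ d P Q) (FPQ t (g ` P) (g ` Q)) \<and>
         (\<forall>p\<in>P. approx_sol t \<beta> (g ` P) (g ` Q) (g p) \<longrightarrow> approx_sol d C' P Q p)"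
proof -
  have gP: "finite (g ` P)" "g ` P \<noteq> {}" using P by auto
  have gQ: "finite (g ` Q)" "g ` Q \<noteq> {}" using Q by auto
  have U: "dist_set t (g p) (g ` Q) \<le> B * dist_set d p Q" if "p \<in> P" for p
  proof -
    obtain q where q: "q \<in> Q" "dist_set d p Q = edist d p q" using ds_in[OF Q] by blast
    have "dist_set t (g p) (g ` Q) \<le> edist t (g p) (g q)" using gQ q by (intro ds_le) auto
    also have "\<dots> \<le> B * edist d p q" using Hup that q by blast
    finally show ?thesis using q by simp
  qed
  have Fnn: "FPQ d P Q \<ge> 0" using p0 ds_nonneg[OF Q] by metis
  have low: "FPQ d P Q \<le> FPQ t (g ` P) (g ` Q)"
  proof -
    obtain q where q: "q \<in> Q" "dist_set t (g p0) (g ` Q) = edist t (g p0) (g q)"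
      using ds_in[OF gQ, of t "g p0"] by blast
    have "FPQ d P Q = dist_set d p0 Q" using p0 by simp
    also have "\<dots> \<le> edist d p0 q" using Q q by (intro ds_le) auto
    also have "\<dots> \<le> edist t (g p0) (g q)" using Hlow q by blast
    also have "\<dots> = dist_set t (g p0) (g ` Q)" using q by simp
    also have "\<dots> \<le> FPQ t (g ` P) (g ` Q)" using gP p0 by (intro fpq_ge) auto
    finally show ?thesis .
  qed
  have up: "FPQ t (g ` P) (g ` Q) \<le> C' * FPQ d P Q"
  proof -
    obtain p' where p': "p' \<in> g ` P" "FPQ t (g ` P) (g ` Q) = dist_set t p' (g ` Q)"
      using fpq_in[OF gP] by blast
    then obtain p where p: "p \<in> P" "p' = g p" by blast
    have "FPQ t (g ` P) (g ` Q) \<le> B * dist_set d p Q" using U p p' by simp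
    also have "\<dots> \<le> B * FPQ d P Q" using B P p by (intro mult_left_mono fpq_ge) auto
    also have "\<dots> \<le> C' * FPQ d P Q" using C1 Fnn by (intro mult_right_mono) auto
    finally show ?thesis .
  qed
  have apx: "approx_sol d C' P Q p" if p: "p \<in> P" and a: "approx_sol t \<beta> (g ` P) (g ` Q) (g p)" for p
  proof -
    have "dist_set t (g p) (g ` Q) \<ge> FPQ t (g ` P) (g ` Q) / \<beta>" using a by (simp add: approx_sol_def)
    hence "\<beta> * dist_set t (g p) (g ` Q) \<ge> FPQ t (g ` P) (g ` Q)" using bet by (simp add: field_simps)
    hence "\<beta> * (B * dist_set d p Q) \<ge> FPQ d P Q"
      using low U[OF p] bet by (smt (verit) mult_left_mono)
    moreover have "C' * dist_set d p Q \<ge> \<beta> * (B * dist_set d p Q)"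
      using C2 ds_nonneg[OF Q, of d p] by (simp add: mult.assoc[symmetric] mult_right_mono)
    ultimately have "C' * dist_set d p Q \<ge> FPQ d P Q" by linarith
    hence "dist_set d p Q \<ge> FPQ d P Q / C'" using C0 by (simp add: field_simps)
    thus ?thesis using p by (simp add: approx_sol_def)
  qed
  show ?thesis using low up apx by (simp add: estimation_def)
qed

definition N0 :: real where "N0 = 3 * exp 16"
definition Kq :: real where "Kq = 32 * (ln N0 + ln 10)"

lemma N0_pos: "N0 > 0" by (simp add: N0_def)
lemma Kq_pos: "Kq > 0"
proof -
  have a: "ln N0 > 0" unfolding N0_def by (smt (verit) exp_gt_one ln_gt_zero one_less_exp_iff)
  have b: "ln (10::real) > 0" by simp
  have "ln N0 + ln 10 > 0" by (rule add_pos_pos[OF a b])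
  thus ?thesis unfolding Kq_def by simp
qed

lemma net_sq: "z \<in> net n \<Longrightarrow> (\<Sum>j<n. (z j)^2) \<le> 4" by (simp add: net_def)

lemma bad1:
  fixes t d :: nat
  assumes t: "t \<ge> 1" and d: "d \<ge> 1"
  shows "measure_pmf.prob (matp d t) (\<Union>z\<in>net t \<times> net d. {R. sqrt (Kq * real (t+d)) \<le> bil t d R (fst z) (snd z)}) \<le> 1/10"
proof -
  define s where "s = sqrt (Kq * real (t+d))"
  have s: "s > 0" using Kq_pos t by (simp add: s_def)
  have s2: "s^2 = Kq * real (t+d)" using Kq_pos by (simp add: s_def)
  have fn: "finite (net t)" "finite (net d)" using net_card t d by auto
  have fin: "finite (net t \<times> net d)" using fn by simp
  define l where "l = s / 16"
  have l: "l > 0" using s by (simp add: l_def)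
  have each: "measure_pmf.prob (matp d t) {R. s \<le> bil t d R (fst z) (snd z)} \<le> exp (- (s^2 / 32))"
    if z: "z \<in> net t \<times> net d" for z
  proof -
    have Y: "(\<Sum>i<t. (fst z i)^2) \<le> 4" and X: "(\<Sum>j<d. (snd z j)^2) \<le> 4"
      using z net_sq by auto
    have "measure_pmf.prob (matp d t) {R. s \<le> bil t d R (fst z) (snd z)}
        \<le> exp (l^2 * (\<Sum>i<t. (fst z i)^2) * (\<Sum>j<d. (snd z j)^2) / 2 - l * s)"
      using upper_tail[OF l, of d t s "fst z" "snd z"] by (simp add: bil_def)
    also have "\<dots> \<le> exp (l^2 * 4 * 4 / 2 - l * s)"
    proof -
      have "(\<Sum>i<t. (fst z i)^2) * (\<Sum>j<d. (snd z j)^2) \<le> 4 * 4"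
        using X Y by (intro mult_mono) (auto intro: sum_nonneg)
      hence "l^2 * ((\<Sum>i<t. (fst z i)^2) * (\<Sum>j<d. (snd z j)^2)) \<le> l^2 * (4 * 4)"
        by (intro mult_left_mono) auto
      thus ?thesis by (simp add: mult.assoc)
    qed
    also have "l^2 * 4 * 4 / 2 - l * s = - (s^2 / 32)"
      by (simp add: l_def power2_eq_square field_simps)
    finally show ?thesis .
  qed
  have "measure_pmf.prob (matp d t) (\<Union>z\<in>net t \<times> net d. {R. s \<le> bil t d R (fst z) (snd z)})
      \<le> (\<Sum>z\<in>net t \<times> net d. measure_pmf.prob (matp d t) {R. s \<le> bil t d R (fst z) (snd z)})"
    by (rule measure_UNION_le[OF fin]) auto
  also have "\<dots> \<le> (\<Sum>z\<in>net t \<times> net d. exp (- (s^2 / 32)))"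
    by (intro sum_mono each)
  also have "\<dots> = real (card (net t)) * real (card (net d)) * exp (- (s^2 / 32))"
    by (simp add: card_cartesian_product)
  also have "\<dots> \<le> N0 ^ t * N0 ^ d * exp (- (s^2 / 32))"
    using net_card[OF t] net_card[OF d] by (intro mult_right_mono mult_mono) (auto simp: N0_def)
  also have "\<dots> = (N0 * exp (- (ln N0 + ln 10))) ^ (t + d)"
  proof -
    have "exp (- (s^2 / 32)) = exp (real (t+d) * (- (ln N0 + ln 10)))"
      using s2 by (simp add: Kq_def algebra_simps)
    also have "\<dots> = exp (- (ln N0 + ln 10)) ^ (t+d)" by (rule exp_of_nat_mult)
    finally show ?thesis by (simp add: power_add power_mult_distrib)
  qed
  also have "N0 * exp (- (ln N0 + ln 10)) = 1/10"
  proof -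
    have "exp (ln N0 + ln 10) = N0 * 10" using N0_pos by (simp add: exp_add)
    hence h: "exp (- (ln N0 + ln 10)) = inverse (N0 * 10)" by (simp only: exp_minus)
    show ?thesis by (subst h) (use N0_pos in \<open>simp add: field_simps\<close>)
  qed
  also have "(1/10::real) ^ (t + d) \<le> (1/10) ^ 1"
    using t by (intro power_decreasing) auto
  finally show ?thesis by (simp add: s_def)
qed

lemma mat_diff:
  "mat_apply t d (\<lambda>i j. c * R i j) x j - mat_apply t d (\<lambda>i j. c * R i j) y j
     = c * mat_apply t d R (\<lambda>j. x j - y j) j"
  by (simp add: mat_apply_def sum_distrib_left sum_subtractf algebra_simps)

lemma edist_G:
  "edist t (mat_apply t d (\<lambda>i j. c * R i j) x) (mat_apply t d (\<lambda>i j. c * R i j) y)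
     = \<bar>c\<bar> * sqrt (n2 t (mat_apply t d R (\<lambda>j. x j - y j)))"
proof -
  have "edist t (mat_apply t d (\<lambda>i j. c * R i j) x) (mat_apply t d (\<lambda>i j. c * R i j) y)
      = sqrt (n2 t (\<lambda>j. c * mat_apply t d R (\<lambda>j. x j - y j) j))"
    unfolding edist_def n2_def by (simp only: mat_diff)
  also have "\<dots> = sqrt (c^2 * n2 t (mat_apply t d R (\<lambda>j. x j - y j)))" by (simp only: n2_scale)
  also have "\<dots> = \<bar>c\<bar> * sqrt (n2 t (mat_apply t d R (\<lambda>j. x j - y j)))" by (simp add: real_sqrt_mult)
  finally show ?thesis .
qed

lemma edist_n2: "edist d x y = sqrt (n2 d (\<lambda>j. x j - y j))"
  by (simp add: edist_def n2_def)

lemma n2_mat: "n2 t (mat_apply t d R v) = (\<Sum>i<t. (\<Sum>j<d. R i j * v j)^2)"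
  unfolding n2_def mat_apply_def by simp

lemma B_bound:
  fixes t d :: nat and \<alpha> :: real
  assumes t: "t \<ge> 1" and a: "\<alpha> > 1" and td: "real t \<ge> real d / \<alpha>^2"
  shows "sqrt (2 / real t) * 4 * sqrt (Kq * real (t + d)) \<le> 8 * sqrt Kq * \<alpha>"
proof -
  have tp: "real t > 0" using t by simp
  have "real d \<le> real t * \<alpha>^2" using td a by (simp add: field_simps)
  hence dt: "real d / real t \<le> \<alpha>^2" using tp by (simp add: field_simps)
  have "sqrt (2 / real t) * 4 * sqrt (Kq * real (t + d)) = sqrt (32 * Kq * (1 + real d / real t))"
  proof -
    have s16: "sqrt 16 = (4::real)" by (rule real_sqrt_unique) auto
    have "sqrt (2 / real t) * 4 * sqrt (Kq * real (t + d)) = sqrt (2 / real t) * sqrt 16 * sqrt (Kq * real (t + d))"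
      by (simp only: s16)
    also have "\<dots> = sqrt (2 / real t * 16 * (Kq * real (t + d)))"
      by (simp only: real_sqrt_mult)
    finally have "sqrt (2 / real t) * 4 * sqrt (Kq * real (t + d)) = sqrt (2 / real t * 16 * (Kq * real (t + d)))" .
    also have "2 / real t * 16 * (Kq * real (t + d)) = 32 * Kq * (1 + real d / real t)"
      using tp by (simp add: field_simps)
    finally show ?thesis .
  qed
  also have "\<dots> \<le> sqrt (32 * Kq * (2 * \<alpha>^2))"
  proof (intro real_sqrt_le_mono mult_left_mono)
    have "\<alpha>^2 > 1" using a by (simp add: one_less_power)
    thus "1 + real d / real t \<le> 2 * \<alpha>^2" using dt by linarith
  qed (use Kq_pos in auto)
  also have "\<dots> = sqrt (64 * Kq * \<alpha>^2)" by simp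
  also have "\<dots> = 8 * sqrt Kq * \<alpha>" using a by (simp add: real_sqrt_mult)
  finally show ?thesis .
qed

theorem theoremC1:
  fixes \<beta> :: real
  assumes "\<beta> \<ge> 1"
  shows "\<exists>C>0. \<forall>(d::nat) (\<alpha>::real) (k::nat) (n::nat).
    d > 1 \<and> \<alpha> > 1 \<and> 1 \<le> k \<and> k \<le> n \<longrightarrow>
    (\<exists>(t::nat) (M :: (nat \<Rightarrow> nat \<Rightarrow> real) measure).
       prob_space M \<and>
       real t \<le> C * (1 + ln (real k) + real d / \<alpha>\<^sup>2) \<and>
       (\<forall>P Q. finite P \<and> card P = n \<and> (\<forall>p\<in>P. in_dim d p) \<and>
              finite Q \<and> card Q = k \<and> (\<forall>q\<in>Q. in_dim d q) \<longrightarrow>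
          measure M {G \<in> space M.
             estimation (C * \<alpha>) (FPQ d P Q)
               (FPQ t (mat_apply t d G ` P) (mat_apply t d G ` Q)) \<and>
             (\<forall>p\<in>P. approx_sol t \<beta> (mat_apply t d G ` P) (mat_apply t d G ` Q)
                        (mat_apply t d G p)
                     \<longrightarrow> approx_sol d (C * \<alpha>) P Q p)} \<ge> 2/3))"
proof -
  have bet: "\<beta> \<ge> 1" by fact
  define Bm where "Bm = 8 * sqrt Kq"
  have Bm: "Bm > 0" using Kq_pos by (simp add: Bm_def)
  define C where "C = max 500 (Bm * \<beta>)"
  have C500: "C \<ge> 500" and CB: "C \<ge> Bm * \<beta>" by (simp_all add: C_def)
  have CBm: "C \<ge> Bm" using CB Bm bet by (smt (verit) mult_le_cancel_left1)
  show ?thesis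
  proof (intro exI[of _ C] conjI allI impI)
    show "C > 0" using C500 by simp
    fix d :: nat and \<alpha> :: real and k n :: nat
    assume H: "d > 1 \<and> \<alpha> > 1 \<and> 1 \<le> k \<and> k \<le> n"
    hence d1: "d \<ge> 1" and a1: "\<alpha> > 1" and k1: "k \<ge> 1" and kn: "k \<le> n" by auto
    define t where "t = nat \<lceil>48 * ln (10 * real k) + real d / \<alpha>^2\<rceil>"
    have lnk: "ln (10 * real k) = ln 10 + ln (real k)" using k1 by (simp add: ln_mult)
    have lnk0: "ln (real k) \<ge> 0" using k1 by simp
    have ln10: "ln (10::real) \<le> 9" using ln_le_minus_one[of 10] by simp
    have ln10p: "ln (10::real) > 0" by simp
    have dq: "real d / \<alpha>^2 \<ge> 0" by simp
    have tge: "real t \<ge> 48 * ln (10 * real k) + real d / \<alpha>^2"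
    proof -
      have "48 * ln (10 * real k) + real d / \<alpha>^2 \<ge> 0" using lnk lnk0 ln10p dq by linarith
      thus ?thesis unfolding t_def by linarith
    qed
    have tle: "real t \<le> 48 * ln (10 * real k) + real d / \<alpha>^2 + 1"
    proof -
      have "48 * ln (10 * real k) + real d / \<alpha>^2 \<ge> 0" using lnk lnk0 ln10p dq by linarith
      thus ?thesis unfolding t_def by linarith
    qed
    have t1: "t \<ge> 1"
    proof -
      have "real t > 0" using tge lnk lnk0 ln10p dq by linarith
      thus ?thesis by simp
    qed
    have td: "real t \<ge> real d / \<alpha>^2" using tge lnk lnk0 ln10p by linarith
    have tlnk: "real t \<ge> 48 * ln (10 * real k)" using tge dq by linarith
    define ct where "ct = sqrt (2 / real t)"
    define sc where "sc = (\<lambda>(R :: nat \<Rightarrow> nat \<Rightarrow> real) i j. ct * R i j)"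
    define M where "M = measure_pmf (map_pmf sc (matp d t))"
    define s where "s = sqrt (Kq * real (t + d))"
    have s0: "s \<ge> 0" using Kq_pos by (simp add: s_def)
    define B where "B = ct * (4 * s)"
    have B0: "B \<ge> 0" using s0 by (simp add: B_def ct_def)
    have BB: "B \<le> Bm * \<alpha>"
      using B_bound[OF t1 a1 td] by (simp add: B_def ct_def s_def Bm_def mult.assoc mult.left_commute)
    show "\<exists>t M. prob_space M \<and> real t \<le> C * (1 + ln (real k) + real d / \<alpha>\<^sup>2) \<and>
       (\<forall>P Q. finite P \<and> card P = n \<and> (\<forall>p\<in>P. in_dim d p) \<and>
              finite Q \<and> card Q = k \<and> (\<forall>q\<in>Q. in_dim d q) \<longrightarrow>
          measure M {G \<in> space M.
             estimation (C * \<alpha>) (FPQ d P Q)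
               (FPQ t (mat_apply t d G ` P) (mat_apply t d G ` Q)) \<and>
             (\<forall>p\<in>P. approx_sol t \<beta> (mat_apply t d G ` P) (mat_apply t d G ` Q)
                        (mat_apply t d G p)
                     \<longrightarrow> approx_sol d (C * \<alpha>) P Q p)} \<ge> 2/3)"
    proof (intro exI[of _ t] exI[of _ M] conjI allI impI)
      show "prob_space M" unfolding M_def by (rule prob_space_measure_pmf)
      show "real t \<le> C * (1 + ln (real k) + real d / \<alpha>\<^sup>2)"
      proof -
        have "real t \<le> 433 + 48 * ln (real k) + real d / \<alpha>^2" using tle lnk ln10 by linarith
        also have "\<dots> \<le> 500 * (1 + ln (real k) + real d / \<alpha>^2)"
        proof -
          have "500 * (1 + ln (real k) + real d / \<alpha>^2) = 500 + 500 * ln (real k) + 500 * (real d / \<alpha>^2)"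
            by (simp only: distrib_left mult_1_right)
          thus ?thesis using lnk0 dq by linarith
        qed
        also have "\<dots> \<le> C * (1 + ln (real k) + real d / \<alpha>^2)"
          using C500 lnk0 dq by (intro mult_right_mono) auto
        finally show ?thesis .
      qed
      fix P Q :: "(nat \<Rightarrow> real) set"
      assume PQ: "finite P \<and> card P = n \<and> (\<forall>p\<in>P. in_dim d p) \<and> finite Q \<and> card Q = k \<and> (\<forall>q\<in>Q. in_dim d q)"
      hence finP: "finite P" and cP: "card P = n" and dP: "\<forall>p\<in>P. in_dim d p"
        and finQ: "finite Q" and cQ: "card Q = k" and dQ: "\<forall>q\<in>Q. in_dim d q" by auto
      have Pne: "P \<noteq> {}" using cP kn k1 by auto
      have Qne: "Q \<noteq> {}" using cQ k1 by auto
      obtain p0 where p0: "p0 \<in> P" "FPQ d P Q = dist_set d p0 Q" using fpq_in[OF finP Pne] by blast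
      let ?v = "\<lambda>q j. p0 j - q j"
      define Good where "Good = (\<lambda>R. (\<forall>y'\<in>net t. \<forall>x'\<in>net d. bil t d R y' x' < s) \<and>
          (\<forall>q\<in>Q. n2 d (?v q) > 0 \<longrightarrow> (\<Sum>i<t. (\<Sum>j<d. R i j * ?v q j)^2) > real t * n2 d (?v q) / 2))"
      let ?Phi = "\<lambda>G. estimation (C * \<alpha>) (FPQ d P Q)
               (FPQ t (mat_apply t d G ` P) (mat_apply t d G ` Q)) \<and>
             (\<forall>p\<in>P. approx_sol t \<beta> (mat_apply t d G ` P) (mat_apply t d G ` Q)
                        (mat_apply t d G p)
                     \<longrightarrow> approx_sol d (C * \<alpha>) P Q p)"
      have claim1: "?Phi (sc R)" if G: "Good R" for R
      proof -
        have Hn: "\<forall>y'\<in>net t. \<forall>x'\<in>net d. bil t d R y' x' < s" using G by (simp add: Good_def)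
        have ed: "edist t (mat_apply t d (sc R) x) (mat_apply t d (sc R) y)
              = ct * sqrt (n2 t (mat_apply t d R (\<lambda>j. x j - y j)))" for x y
          unfolding sc_def using edist_G[of t d ct R x y] by (simp add: ct_def)
        have Hup: "\<forall>p\<in>P. \<forall>q\<in>Q. edist t (mat_apply t d (sc R) p) (mat_apply t d (sc R) q) \<le> B * edist d p q"
        proof (intro ballI)
          fix p q assume p: "p \<in> P" and q: "q \<in> Q"
          have iv: "in_dim d (\<lambda>j. p j - q j)" using dP dQ p q by (auto simp: in_dim_def)
          have "n2 t (mat_apply t d R (\<lambda>j. p j - q j)) \<le> (4 * s)^2 * n2 d (\<lambda>j. p j - q j)"
            by (rule opbound2[OF t1 d1 Hn iv])
          hence "sqrt (n2 t (mat_apply t d R (\<lambda>j. p j - q j))) \<le> sqrt ((4 * s)^2 * n2 d (\<lambda>j. p j - q j))"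
            by (rule real_sqrt_le_mono)
          also have "\<dots> = 4 * s * edist d p q" using s0 by (simp add: real_sqrt_mult edist_n2)
          finally have "ct * sqrt (n2 t (mat_apply t d R (\<lambda>j. p j - q j))) \<le> ct * (4 * s * edist d p q)"
            by (intro mult_left_mono) (auto simp: ct_def)
          thus "edist t (mat_apply t d (sc R) p) (mat_apply t d (sc R) q) \<le> B * edist d p q"
            by (simp add: ed B_def mult.assoc)
        qed
        have Hlow: "\<forall>q\<in>Q. edist t (mat_apply t d (sc R) p0) (mat_apply t d (sc R) q) \<ge> edist d p0 q"
        proof (intro ballI)
          fix q assume q: "q \<in> Q"
          show "edist t (mat_apply t d (sc R) p0) (mat_apply t d (sc R) q) \<ge> edist d p0 q"
          proof (cases "n2 d (?v q) > 0")
            case False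
            hence "n2 d (?v q) = 0" using n2_nonneg[of d "?v q"] by linarith
            hence "edist d p0 q = 0" by (simp add: edist_n2)
            thus ?thesis using edist_nonneg by simp
          next
            case True
            hence gt: "(\<Sum>i<t. (\<Sum>j<d. R i j * ?v q j)^2) > real t * n2 d (?v q) / 2"
              using G q by (simp add: Good_def)
            have "n2 d (?v q) < ct^2 * n2 t (mat_apply t d R (?v q))"
            proof -
              have "ct^2 = 2 / real t" using t1 by (simp add: ct_def)
              moreover have "n2 t (mat_apply t d R (?v q)) > real t * n2 d (?v q) / 2"
                using gt by (simp add: n2_mat)
              ultimately show ?thesis
              proof -
                assume c2: "ct^2 = 2 / real t" and gtn: "n2 t (mat_apply t d R (?v q)) > real t * n2 d (?v q) / 2"
                have tp: "real t > 0" using t1 by simp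
                have "(2 / real t) * (real t * n2 d (?v q) / 2) < (2 / real t) * n2 t (mat_apply t d R (?v q))"
                  using tp gtn by (intro mult_strict_left_mono) auto
                moreover have "(2 / real t) * (real t * n2 d (?v q) / 2) = n2 d (?v q)" using tp by simp
                ultimately show ?thesis using c2 by simp
              qed
            qed
            hence "sqrt (n2 d (?v q)) \<le> sqrt (ct^2 * n2 t (mat_apply t d R (?v q)))"
              by (intro real_sqrt_le_mono) simp
            also have "\<dots> = sqrt (ct^2) * sqrt (n2 t (mat_apply t d R (?v q)))"
              by (rule real_sqrt_mult)
            also have "sqrt (ct^2) = ct" by (simp add: ct_def)
            finally have f: "sqrt (n2 d (?v q)) \<le> ct * sqrt (n2 t (mat_apply t d R (?v q)))" .
            show ?thesis using f by (simp only: ed edist_n2[of d p0 q])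
          qed
        qed
        have "C * \<alpha> \<ge> B" using BB CBm a1 by (smt (verit) mult_right_mono)
        moreover have "C * \<alpha> \<ge> \<beta> * B"
        proof -
          have "\<beta> * B \<le> \<beta> * (Bm * \<alpha>)" using BB bet by (intro mult_left_mono) auto
          also have "\<dots> = (Bm * \<beta>) * \<alpha>" by simp
          also have "\<dots> \<le> C * \<alpha>" using CB a1 by (intro mult_right_mono) auto
          finally show ?thesis .
        qed
        moreover have "C * \<alpha> > 0" using C500 a1 by simp
        ultimately show ?thesis
          using det[OF finP Pne finQ Qne Hup p0(1) p0(2)[symmetric] Hlow B0 bet] by blast
      qed
      define Bad1 where "Bad1 = (\<Union>z\<in>net t \<times> net d. {R. sqrt (Kq * real (t+d)) \<le> bil t d R (fst z) (snd z)})"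
      define Q' where "Q' = {q\<in>Q. n2 d (?v q) > 0}"
      define Bad2 where "Bad2 = (\<Union>q\<in>Q'. {R. (\<Sum>i<t. (\<Sum>j<d. R i j * ?v q j)^2) \<le> real t * (\<Sum>j<d. (?v q j)^2) / 2})"
      have b1: "measure_pmf.prob (matp d t) Bad1 \<le> 1/10" unfolding Bad1_def by (rule bad1[OF t1 d1])
      have b2: "measure_pmf.prob (matp d t) Bad2 \<le> 1/10"
      proof -
        have finQ': "finite Q'" using finQ by (simp add: Q'_def)
        have "measure_pmf.prob (matp d t) Bad2
            \<le> (\<Sum>q\<in>Q'. measure_pmf.prob (matp d t) {R. (\<Sum>i<t. (\<Sum>j<d. R i j * ?v q j)^2) \<le> real t * (\<Sum>j<d. (?v q j)^2) / 2})"
          unfolding Bad2_def by (rule measure_UNION_le[OF finQ']) auto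
        also have "\<dots> \<le> (\<Sum>q\<in>Q'. exp (- real t / 48))"
        proof (intro sum_mono)
          fix q assume "q \<in> Q'"
          hence "(\<Sum>j<d. (?v q j)^2) > 0" by (simp add: Q'_def n2_def)
          thus "measure_pmf.prob (matp d t) {R. (\<Sum>i<t. (\<Sum>j<d. R i j * ?v q j)^2) \<le> real t * (\<Sum>j<d. (?v q j)^2) / 2}
              \<le> exp (- real t / 48)" by (rule lower_tail)
        qed
        also have "\<dots> = real (card Q') * exp (- real t / 48)" by simp
        also have "\<dots> \<le> real k * exp (- real t / 48)"
        proof -
          have "card Q' \<le> card Q" unfolding Q'_def by (intro card_mono finQ) auto
          thus ?thesis using cQ by (intro mult_right_mono) auto
        qed
        also have "\<dots> \<le> real k * exp (- ln (10 * real k))"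
          using tlnk by (intro mult_left_mono) auto
        also have "\<dots> = 1/10" using k1 by (simp add: exp_minus)
        finally show ?thesis .
      qed
      have sub: "UNIV - (Bad1 \<union> Bad2) \<subseteq> {R. Good R}"
      proof
        fix R assume R: "R \<in> UNIV - (Bad1 \<union> Bad2)"
        have "\<forall>y'\<in>net t. \<forall>x'\<in>net d. bil t d R y' x' < s"
          using R by (force simp: Bad1_def s_def not_le)
        moreover have "\<forall>q\<in>Q. n2 d (?v q) > 0 \<longrightarrow> (\<Sum>i<t. (\<Sum>j<d. R i j * ?v q j)^2) > real t * n2 d (?v q) / 2"
          using R by (force simp: Bad2_def Q'_def n2_def not_le)
        ultimately show "R \<in> {R. Good R}" by (simp add: Good_def)
      qed
      have "measure_pmf.prob (matp d t) {R. Good R} \<ge> 4/5"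
      proof -
        have e1: "measure_pmf.prob (matp d t) (UNIV - (Bad1 \<union> Bad2)) = 1 - measure_pmf.prob (matp d t) (Bad1 \<union> Bad2)"
          using measure_pmf.prob_compl[of "Bad1 \<union> Bad2" "matp d t"] by simp
        have e2: "measure_pmf.prob (matp d t) (Bad1 \<union> Bad2) \<le> measure_pmf.prob (matp d t) Bad1 + measure_pmf.prob (matp d t) Bad2"
          by (rule measure_Un_le) auto
        have "measure_pmf.prob (matp d t) (UNIV - (Bad1 \<union> Bad2)) \<ge> 4/5" using e1 e2 b1 b2 by linarith
        moreover have "measure_pmf.prob (matp d t) (UNIV - (Bad1 \<union> Bad2)) \<le> measure_pmf.prob (matp d t) {R. Good R}"
          using sub by (intro measure_pmf.finite_measure_mono) auto
        ultimately show ?thesis by linarith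
      qed
      moreover have "measure_pmf.prob (matp d t) {R. Good R} \<le> measure M {G \<in> space M. ?Phi G}"
      proof -
        have "measure M {G \<in> space M. ?Phi G} = measure_pmf.prob (matp d t) (sc -` {G. ?Phi G})"
          unfolding M_def by simp
        moreover have "{R. Good R} \<subseteq> sc -` {G. ?Phi G}" using claim1 by auto
        ultimately show ?thesis by (simp add: measure_pmf.finite_measure_mono)
      qed
      ultimately show "measure M {G \<in> space M. ?Phi G} \<ge> 2/3" by linarith
    qed
  qed
qed


end
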